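(* Let $K$ be an algebraically closed field of characteristic zero, $\deg_1$ the standard homogeneous degree on $K[x_1,\dots,x_n]$, $\Phi=(f_1,\dots,f_n)$ a polynomial automorphism of $K^n$, and $I=\{Q : Q(\overline{f_1},\dots,\overline{f_n})=0\}$ where $\overline{f_i}$ is the homogeneous component of highest degree of $f_i$. Then $I=(0)$ if and only if $\Phi$ is affine, i.e. $\deg_1(f_i)=1$ for all $i=1,\dots,n$. *)

theory Defs
  imports "HOL-Library.Poly_Mapping" "HOL-Computational_Algebra.Polynomial"
begin

text \<open>K[x_1..x_n] corresponds to those polynomials whose variables lie in {..<n}.\<close>

type_synonym 'a mpoly = "(nat \<Rightarrow>\<^sub>0 nat) \<Rightarrow>\<^sub>0 'a"

definition mpoly_const :: "'a::zero \<Rightarrow> 'a mpoly" where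
  "mpoly_const c = Poly_Mapping.single 0 c"

definition mpoly_var :: "nat \<Rightarrow> 'a::{zero,one} mpoly" where
  "mpoly_var i = Poly_Mapping.single (Poly_Mapping.single i 1) 1"

definition mpoly_vars :: "'a::zero mpoly \<Rightarrow> nat set" where
  "mpoly_vars p = (\<Union>m\<in>Poly_Mapping.keys p. Poly_Mapping.keys m)"

text \<open>Standard (total) degree of a monomial and of a polynomial (deg_1); deg 0 = 0 by convention.\<close>
definition mon_deg :: "(nat \<Rightarrow>\<^sub>0 nat) \<Rightarrow> nat" where
  "mon_deg m = (\<Sum>i\<in>Poly_Mapping.keys m. Poly_Mapping.lookup m i)"

definition total_degree :: "'a::zero mpoly \<Rightarrow> nat" where
  "total_degree p = Max (insert 0 (mon_deg ` Poly_Mapping.keys p))"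

definition top_component :: "'a::zero mpoly \<Rightarrow> 'a mpoly" where
  "top_component p =
     Abs_poly_mapping (\<lambda>m. if mon_deg m = total_degree p then Poly_Mapping.lookup p m else 0)"

definition mpoly_subst :: "'a::comm_ring_1 mpoly \<Rightarrow> (nat \<Rightarrow> 'a mpoly) \<Rightarrow> 'a mpoly" where
  "mpoly_subst Q g =
     (\<Sum>m\<in>Poly_Mapping.keys Q. mpoly_const (Poly_Mapping.lookup Q m) * (\<Prod>i\<in>Poly_Mapping.keys m. g i ^ Poly_Mapping.lookup m i))"

definition poly_automorphism :: "nat \<Rightarrow> (nat \<Rightarrow> 'a::comm_ring_1 mpoly) \<Rightarrow> bool" where
  "poly_automorphism n f \<longleftrightarrow>
     (\<forall>i<n. mpoly_vars (f i) \<subseteq> {..<n}) \<and>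
     (\<exists>g. (\<forall>i<n. mpoly_vars (g i) \<subseteq> {..<n}) \<and>
          (\<forall>i<n. mpoly_subst (g i) f = mpoly_var i) \<and>
          (\<forall>i<n. mpoly_subst (f i) g = mpoly_var i))"

end

theory Submission
  imports Defs
begin

definition lin :: "('k \<Rightarrow> 'c \<Rightarrow> 'd::comm_monoid_add) \<Rightarrow> ('k \<Rightarrow>\<^sub>0 'c::zero) \<Rightarrow> 'd" where
  "lin h p = (\<Sum>m\<in>Poly_Mapping.keys p. h m (Poly_Mapping.lookup p m))"

definition addh :: "('k \<Rightarrow> 'c::monoid_add \<Rightarrow> 'd::comm_monoid_add) \<Rightarrow> bool" where
  "addh h \<longleftrightarrow> (\<forall>m. h m 0 = 0) \<and> (\<forall>m a b. h m (a + b) = h m a + h m b)"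

lemma lin_add: "addh h \<Longrightarrow> lin h (p + q) = lin h p + lin h q"
  unfolding lin_def addh_def by (rule setsum_keys_plus_distrib) auto

lemma lin_zero[simp]: "lin h 0 = 0"
  by (simp add: lin_def)

lemma lin_single: "addh h \<Longrightarrow> lin h (Poly_Mapping.single m c) = h m c"
  by (auto simp: lin_def addh_def)

lemma lin_sum: assumes "addh h" shows "lin h (\<Sum>x\<in>S. F x) = (\<Sum>x\<in>S. lin h (F x))"
proof (cases "finite S")
  case True thus ?thesis by (induction S rule: finite_induct) (auto simp: lin_add[OF assms])
qed simp

lemma expansion: "(\<Sum>m\<in>Poly_Mapping.keys p. Poly_Mapping.single m (Poly_Mapping.lookup p m)) = p"
proof (rule poly_mapping_eqI)
  fix x
  show "Poly_Mapping.lookup (\<Sum>m\<in>Poly_Mapping.keys p. Poly_Mapping.single m (Poly_Mapping.lookup p m)) x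
      = Poly_Mapping.lookup p x"
    by (simp add: lookup_sum lookup_single when_def in_keys_iff)
qed

lemma mult_expand:
  fixes p q :: "('k::comm_monoid_add \<Rightarrow>\<^sub>0 'c::comm_semiring_0)"
  shows "p * q = (\<Sum>m\<in>Poly_Mapping.keys p. \<Sum>m'\<in>Poly_Mapping.keys q.
     Poly_Mapping.single (m + m') (Poly_Mapping.lookup p m * Poly_Mapping.lookup q m'))"
proof -
  have "p * q = (\<Sum>m\<in>Poly_Mapping.keys p. Poly_Mapping.single m (Poly_Mapping.lookup p m)) *
     (\<Sum>m\<in>Poly_Mapping.keys q. Poly_Mapping.single m (Poly_Mapping.lookup q m))"
    by (simp only: expansion)
  thus ?thesis by (simp add: sum_product mult_single)
qed

lemma lin_mult:
  fixes p q :: "('k::comm_monoid_add \<Rightarrow>\<^sub>0 'c::comm_semiring_0)"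
  assumes "addh h"
  shows "lin h (p * q) = (\<Sum>m\<in>Poly_Mapping.keys p. \<Sum>m'\<in>Poly_Mapping.keys q.
     h (m + m') (Poly_Mapping.lookup p m * Poly_Mapping.lookup q m'))"
  by (subst mult_expand) (simp add: lin_sum[OF assms] lin_single[OF assms])


definition M :: "(nat \<Rightarrow> 'a::comm_ring_1 mpoly) \<Rightarrow> (nat \<Rightarrow>\<^sub>0 nat) \<Rightarrow> 'a mpoly" where
  "M g m = (\<Prod>i\<in>Poly_Mapping.keys m. g i ^ Poly_Mapping.lookup m i)"

lemma keys_add_nat: "Poly_Mapping.keys (m + m' :: 'k \<Rightarrow>\<^sub>0 nat) = Poly_Mapping.keys m \<union> Poly_Mapping.keys m'"
  by (auto simp: in_keys_iff lookup_add)

lemma M_super: assumes "finite S" "Poly_Mapping.keys m \<subseteq> S"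
  shows "M g m = (\<Prod>i\<in>S. g i ^ Poly_Mapping.lookup m i)"
  unfolding M_def by (rule prod.mono_neutral_left) (use assms in \<open>auto simp: in_keys_iff\<close>)

lemma M_add: "M g (m + m') = M g m * M g m'"
proof -
  let ?S = "Poly_Mapping.keys m \<union> Poly_Mapping.keys m'"
  have "M g (m + m') = (\<Prod>i\<in>?S. g i ^ Poly_Mapping.lookup (m+m') i)"
    by (rule M_super) (auto simp: keys_add_nat)
  also have "\<dots> = (\<Prod>i\<in>?S. g i ^ Poly_Mapping.lookup m i) * (\<Prod>i\<in>?S. g i ^ Poly_Mapping.lookup m' i)"
    by (simp add: lookup_add power_add prod.distrib)
  also have "\<dots> = M g m * M g m'"
    by (subst (1 2) M_super[where S="?S"]) auto
  finally show ?thesis .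
qed

lemma M_zero[simp]: "M g 0 = 1" by (simp add: M_def)
lemma M_var[simp]: "M g (Poly_Mapping.single i 1) = g i" by (simp add: M_def)

lemma const_add: "mpoly_const (a + b) = mpoly_const a + mpoly_const b"
  by (simp add: mpoly_const_def single_add)
lemma const_zero[simp]: "mpoly_const 0 = 0" by (simp add: mpoly_const_def)
lemma const_one[simp]: "mpoly_const 1 = 1" by (simp add: mpoly_const_def)
lemma const_mult: "mpoly_const (a * b) = mpoly_const a * (mpoly_const b :: 'a::comm_ring_1 mpoly)"
  by (simp add: mpoly_const_def mult_single)

lemma addh_subst: "addh (\<lambda>m c. mpoly_const c * M g m)"
  by (simp add: addh_def const_add distrib_right)

lemma subst_lin: "mpoly_subst Q g = lin (\<lambda>m c. mpoly_const c * M g m) Q"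
  by (simp add: mpoly_subst_def lin_def M_def)

lemma subst_add: "mpoly_subst (p + q) g = mpoly_subst p g + mpoly_subst q g"
  by (simp add: subst_lin lin_add[OF addh_subst])

lemma subst_zero[simp]: "mpoly_subst 0 g = 0"
  by (simp add: subst_lin)

lemma subst_sum: "mpoly_subst (\<Sum>x\<in>S. F x) g = (\<Sum>x\<in>S. mpoly_subst (F x) g)"
  by (simp add: subst_lin lin_sum[OF addh_subst])

lemma subst_single: "mpoly_subst (Poly_Mapping.single m c) g = mpoly_const c * M g m"
  by (simp add: subst_lin lin_single[OF addh_subst])

lemma subst_const[simp]: "mpoly_subst (mpoly_const c) g = mpoly_const c"
  by (simp add: mpoly_const_def subst_single)

lemma subst_var[simp]: "mpoly_subst (mpoly_var i) g = g i"
  by (simp add: mpoly_var_def subst_single M_def)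

lemma subst_one[simp]: "mpoly_subst 1 g = 1"
  using subst_const[of 1 g] by simp

lemma subst_uminus: "mpoly_subst (- p) g = - mpoly_subst p g"
proof -
  have "mpoly_subst p g + mpoly_subst (-p) g = 0" using subst_add[of p "-p" g] by simp
  thus ?thesis by (rule minus_unique[symmetric])
qed

lemma subst_diff: "mpoly_subst (p - q) g = mpoly_subst p g - mpoly_subst q g"
  using subst_add[of p "-q" g] by (simp add: subst_uminus)

lemma subst_mult: "mpoly_subst (p * q) g = mpoly_subst p g * mpoly_subst q g"
proof -
  have "mpoly_subst (p * q) g = (\<Sum>m\<in>Poly_Mapping.keys p. \<Sum>m'\<in>Poly_Mapping.keys q.
     (mpoly_const (Poly_Mapping.lookup p m) * M g m) * (mpoly_const (Poly_Mapping.lookup q m') * M g m'))"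
    by (simp add: subst_lin lin_mult[OF addh_subst] const_mult M_add mult_ac)
  also have "\<dots> = mpoly_subst p g * mpoly_subst q g"
    by (simp add: subst_lin lin_def sum_product)
  finally show ?thesis .
qed

lemma subst_power: "mpoly_subst (p ^ k) g = mpoly_subst p g ^ k"
  by (induction k) (simp_all add: subst_mult)

lemma subst_prod: "mpoly_subst (\<Prod>x\<in>S. F x) g = (\<Prod>x\<in>S. mpoly_subst (F x) g)"
proof (cases "finite S")
  case True thus ?thesis by (induction S rule: finite_induct) (auto simp: subst_mult)
qed simp

lemma subst_M: "mpoly_subst (M f m) g = M (\<lambda>i. mpoly_subst (f i) g) m"
  by (simp add: M_def subst_prod subst_power)

lemma subst_compose: "mpoly_subst (mpoly_subst R f) g = mpoly_subst R (\<lambda>i. mpoly_subst (f i) g)"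
proof -
  have "mpoly_subst R f = (\<Sum>m\<in>Poly_Mapping.keys R. mpoly_const (Poly_Mapping.lookup R m) * M f m)"
    by (simp add: subst_lin lin_def)
  thus ?thesis by (simp add: subst_sum subst_mult subst_M, simp add: subst_lin lin_def)
qed

lemma subst_cong: "(\<And>i. i \<in> mpoly_vars Q \<Longrightarrow> g i = g' i) \<Longrightarrow> mpoly_subst Q g = mpoly_subst Q g'"
  unfolding mpoly_subst_def mpoly_vars_def
  by (intro sum.cong refl arg_cong2[where f="(*)"] prod.cong arg_cong2[where f="(^)"]) auto

lemma var_power: "mpoly_var i ^ k = (Poly_Mapping.single (Poly_Mapping.single i k) 1 :: 'a::comm_ring_1 mpoly)"
  by (induction k) (simp_all add: mpoly_var_def mult_single single_add[symmetric])

lemma prod_single: "finite S \<Longrightarrow> (\<Prod>i\<in>S. Poly_Mapping.single (F i) (1::'a::comm_ring_1))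
   = Poly_Mapping.single (\<Sum>i\<in>S. F i) 1"
  by (induction S rule: finite_induct) (simp_all add: mult_single)

lemma M_var_id: "M mpoly_var m = (Poly_Mapping.single m 1 :: 'a::comm_ring_1 mpoly)"
  by (simp add: M_def var_power prod_single expansion)

lemma subst_var_id: "mpoly_subst Q mpoly_var = (Q :: 'a::comm_ring_1 mpoly)"
  by (simp add: subst_lin lin_def M_var_id mpoly_const_def mult_single expansion)


definition wdeg :: "(nat \<Rightarrow> nat) \<Rightarrow> (nat \<Rightarrow>\<^sub>0 nat) \<Rightarrow> nat" where
  "wdeg u m = (\<Sum>i\<in>Poly_Mapping.keys m. u i * Poly_Mapping.lookup m i)"

lemma wdeg_super: assumes "finite S" "Poly_Mapping.keys m \<subseteq> S"
  shows "wdeg u m = (\<Sum>i\<in>S. u i * Poly_Mapping.lookup m i)"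
  unfolding wdeg_def by (rule sum.mono_neutral_left) (use assms in \<open>auto simp: in_keys_iff\<close>)

lemma wdeg_add: "wdeg u (m + m') = wdeg u m + wdeg u m'"
proof -
  let ?S = "Poly_Mapping.keys m \<union> Poly_Mapping.keys m'"
  have "wdeg u (m + m') = (\<Sum>i\<in>?S. u i * Poly_Mapping.lookup (m+m') i)"
    by (rule wdeg_super) (auto simp: keys_add_nat)
  also have "\<dots> = (\<Sum>i\<in>?S. u i * Poly_Mapping.lookup m i) + (\<Sum>i\<in>?S. u i * Poly_Mapping.lookup m' i)"
    by (simp add: lookup_add algebra_simps sum.distrib)
  also have "\<dots> = wdeg u m + wdeg u m'"
    by (subst (1 2) wdeg_super[where S="?S"]) auto
  finally show ?thesis .
qed

lemma wdeg_zero[simp]: "wdeg u 0 = 0" by (simp add: wdeg_def)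

lemma wdeg_eq_0: "wdeg u m = 0 \<longleftrightarrow> (\<forall>i\<in>Poly_Mapping.keys m. u i = 0)"
  by (auto simp: wdeg_def in_keys_iff)

definition wle :: "(nat \<Rightarrow> nat) \<Rightarrow> nat \<Rightarrow> 'a::zero mpoly \<Rightarrow> bool" where
  "wle u d p \<longleftrightarrow> (\<forall>m\<in>Poly_Mapping.keys p. wdeg u m \<le> d)"

definition hp :: "(nat \<Rightarrow> nat) \<Rightarrow> nat \<Rightarrow> 'a::zero mpoly \<Rightarrow> 'a mpoly" where
  "hp u d p = Abs_poly_mapping (\<lambda>m. if wdeg u m = d then Poly_Mapping.lookup p m else 0)"

lemma lookup_hp: "Poly_Mapping.lookup (hp u d p) m = (if wdeg u m = d then Poly_Mapping.lookup p m else 0)"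
proof -
  have "finite {m. (if wdeg u m = d then Poly_Mapping.lookup p m else 0) \<noteq> 0}"
    by (rule finite_subset[of _ "Poly_Mapping.keys p"]) (auto simp: in_keys_iff)
  thus ?thesis by (simp add: hp_def)
qed

lemma hp_add: "hp u d (p + q) = hp u d p + hp u d (q :: 'a::monoid_add mpoly)"
  by (rule poly_mapping_eqI) (simp add: lookup_hp lookup_add)

lemma hp_zero[simp]: "hp u d 0 = 0"
  by (rule poly_mapping_eqI) (simp add: lookup_hp)

lemma hp_sum: "hp u d (\<Sum>x\<in>S. F x) = (\<Sum>x\<in>S. hp u d (F x :: 'a::comm_monoid_add mpoly))"
proof (cases "finite S")
  case True thus ?thesis by (induction S rule: finite_induct) (auto simp: hp_add)
qed simp

lemma hp_single: "hp u d (Poly_Mapping.single m c) = (if wdeg u m = d then Poly_Mapping.single m c else 0)"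
  by (rule poly_mapping_eqI) (simp add: lookup_hp lookup_single when_def)

lemma hp_expand: "hp u d p = (\<Sum>m\<in>Poly_Mapping.keys p. if wdeg u m = d then Poly_Mapping.single m (Poly_Mapping.lookup p m) else 0)"
  by (subst (1) expansion[symmetric]) (simp add: hp_sum hp_single)

lemma wle_mult: "wle u a p \<Longrightarrow> wle u b q \<Longrightarrow> wle u (a + b) (p * (q :: 'a::comm_ring_1 mpoly))"
  unfolding wle_def using keys_mult[of p q] by (force simp: wdeg_add intro: add_mono)

lemma wle_add: "wle u d p \<Longrightarrow> wle u d q \<Longrightarrow> wle u d (p + (q :: 'a::comm_ring_1 mpoly))"
  unfolding wle_def using keys_add[of p q] by blast

lemma wle_zero[simp]: "wle u d 0" by (simp add: wle_def)

lemma wle_sum: "(\<And>x. x \<in> S \<Longrightarrow> wle u d (F x)) \<Longrightarrow> wle u d (\<Sum>x\<in>S. F x :: 'a::comm_ring_1 mpoly)"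
proof (cases "finite S")
  case True thus "(\<And>x. x \<in> S \<Longrightarrow> wle u d (F x)) \<Longrightarrow> ?thesis"
    by (induction S rule: finite_induct) (auto intro: wle_add)
qed simp

lemma wle_const[simp]: "wle u 0 (mpoly_const c)"
  by (simp add: wle_def mpoly_const_def)

lemma wle_one[simp]: "wle u 0 1"
  by (simp add: wle_def)

lemma wle_mono: "wle u a p \<Longrightarrow> a \<le> b \<Longrightarrow> wle u b p"
  unfolding wle_def by force

lemma hp_low: "wle u e p \<Longrightarrow> e < d \<Longrightarrow> hp u d p = 0"
proof (rule poly_mapping_eqI)
  fix k assume a: "wle u e p" "e < d"
  show "Poly_Mapping.lookup (hp u d p) k = Poly_Mapping.lookup 0 k"
  proof (cases "wdeg u k = d")
    case True
    hence "k \<notin> Poly_Mapping.keys p" using a by (auto simp: wle_def)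
    thus ?thesis by (simp add: lookup_hp in_keys_iff)
  qed (simp add: lookup_hp)
qed

lemma hp_const[simp]: "hp u 0 (mpoly_const c) = mpoly_const c"
  by (simp add: mpoly_const_def hp_single)

lemma hp_one[simp]: "hp u 0 1 = (1 :: 'a::comm_ring_1 mpoly)"
  by (rule poly_mapping_eqI) (simp add: lookup_hp lookup_one when_def)

lemma hp_mult:
  fixes p q :: "'a::comm_ring_1 mpoly"
  assumes "wle u a p" "wle u b q"
  shows "hp u (a + b) (p * q) = hp u a p * hp u b q"
proof -
  have "hp u (a + b) (p * q) = (\<Sum>m\<in>Poly_Mapping.keys p. \<Sum>m'\<in>Poly_Mapping.keys q.
     if wdeg u m + wdeg u m' = a + b then Poly_Mapping.single (m + m') (Poly_Mapping.lookup p m * Poly_Mapping.lookup q m') else 0)"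
    by (subst mult_expand) (simp add: hp_sum hp_single wdeg_add)
  also have "\<dots> = (\<Sum>m\<in>Poly_Mapping.keys p. \<Sum>m'\<in>Poly_Mapping.keys q.
     (if wdeg u m = a then Poly_Mapping.single m (Poly_Mapping.lookup p m) else 0) *
     (if wdeg u m' = b then Poly_Mapping.single m' (Poly_Mapping.lookup q m') else 0))"
  proof (intro sum.cong refl)
    fix m m' assume "m \<in> Poly_Mapping.keys p" "m' \<in> Poly_Mapping.keys q"
    hence "wdeg u m \<le> a" "wdeg u m' \<le> b" using assms by (auto simp: wle_def)
    hence "(wdeg u m + wdeg u m' = a + b) \<longleftrightarrow> wdeg u m = a \<and> wdeg u m' = b" by linarith
    thus "(if wdeg u m + wdeg u m' = a + b then Poly_Mapping.single (m + m') (Poly_Mapping.lookup p m * Poly_Mapping.lookup q m') else 0) =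
     (if wdeg u m = a then Poly_Mapping.single m (Poly_Mapping.lookup p m) else 0) *
     (if wdeg u m' = b then Poly_Mapping.single m' (Poly_Mapping.lookup q m') else 0)"
      by (simp add: mult_single)
  qed
  also have "\<dots> = hp u a p * hp u b q"
    by (simp add: hp_expand[of u a p] hp_expand[of u b q] sum_product)
  finally show ?thesis .
qed

lemma power_lemma:
  fixes p :: "'a::comm_ring_1 mpoly"
  assumes "wle u e p"
  shows "wle u (k * e) (p ^ k) \<and> hp u (k * e) (p ^ k) = hp u e p ^ k"
proof (induction k)
  case (Suc k)
  thus ?case using hp_mult[OF assms, of "k * e" "p ^ k"] wle_mult[OF assms, of "k * e" "p ^ k"]
    by simp
qed simp

lemma prod_lemma:
  fixes P :: "nat \<Rightarrow> 'a::comm_ring_1 mpoly"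
  assumes "finite S" "\<And>i. i \<in> S \<Longrightarrow> wle u (e i) (P i)"
  shows "wle u (\<Sum>i\<in>S. e i) (\<Prod>i\<in>S. P i) \<and> hp u (\<Sum>i\<in>S. e i) (\<Prod>i\<in>S. P i) = (\<Prod>i\<in>S. hp u (e i) (P i))"
  using assms
proof (induction S rule: finite_induct)
  case (insert x F)
  hence IH: "wle u (\<Sum>i\<in>F. e i) (\<Prod>i\<in>F. P i)" "hp u (\<Sum>i\<in>F. e i) (\<Prod>i\<in>F. P i) = (\<Prod>i\<in>F. hp u (e i) (P i))"
    and px: "wle u (e x) (P x)" by auto
  show ?case using insert(1,2) hp_mult[OF px IH(1)] wle_mult[OF px IH(1)] IH(2) by simp
qed simp

lemma M_lemma:
  fixes f :: "nat \<Rightarrow> 'a::comm_ring_1 mpoly"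
  assumes "\<And>i. i \<in> Poly_Mapping.keys m \<Longrightarrow> wle u (d i) (f i)"
  shows "wle u (wdeg d m) (M f m) \<and> hp u (wdeg d m) (M f m) = M (\<lambda>i. hp u (d i) (f i)) m"
proof -
  have "wle u (\<Sum>i\<in>Poly_Mapping.keys m. Poly_Mapping.lookup m i * d i) (M f m) \<and>
        hp u (\<Sum>i\<in>Poly_Mapping.keys m. Poly_Mapping.lookup m i * d i) (M f m) =
        (\<Prod>i\<in>Poly_Mapping.keys m. hp u (Poly_Mapping.lookup m i * d i) (f i ^ Poly_Mapping.lookup m i))"
    unfolding M_def by (rule prod_lemma) (auto intro: power_lemma[THEN conjunct1] assms)
  moreover have "wdeg d m = (\<Sum>i\<in>Poly_Mapping.keys m. Poly_Mapping.lookup m i * d i)"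
    by (simp add: wdeg_def mult.commute)
  moreover have "(\<Prod>i\<in>Poly_Mapping.keys m. hp u (Poly_Mapping.lookup m i * d i) (f i ^ Poly_Mapping.lookup m i))
     = M (\<lambda>i. hp u (d i) (f i)) m"
    unfolding M_def by (intro prod.cong refl power_lemma[THEN conjunct2] assms)
  ultimately show ?thesis by simp
qed

lemma subst_wle0:
  fixes g :: "nat \<Rightarrow> 'a::comm_ring_1 mpoly"
  assumes "\<And>i. i \<in> mpoly_vars Q \<Longrightarrow> wle u 0 (g i)"
  shows "wle u 0 (mpoly_subst Q g)"
  unfolding subst_lin lin_def
proof (rule wle_sum)
  fix m assume m: "m \<in> Poly_Mapping.keys Q"
  have "wle u (wdeg (\<lambda>_. 0) m) (M g m)"
    by (rule M_lemma[THEN conjunct1]) (use assms m in \<open>auto simp: mpoly_vars_def\<close>)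
  hence "wle u 0 (M g m)" by (simp add: wdeg_def)
  thus "wle u 0 (mpoly_const (Poly_Mapping.lookup Q m) * M g m)"
    using wle_mult[OF wle_const] by fastforce
qed

lemma key_lemma:
  fixes f :: "nat \<Rightarrow> 'a::comm_ring_1 mpoly"
  assumes D: "\<And>m. m \<in> Poly_Mapping.keys Q \<Longrightarrow> wdeg d m \<le> D"
    and F: "\<And>i. i \<in> mpoly_vars Q \<Longrightarrow> wle u (d i) (f i)"
  shows "hp u D (mpoly_subst Q f) = mpoly_subst (hp d D Q) (\<lambda>i. hp u (d i) (f i))"
proof -
  have "hp u D (mpoly_subst Q f) = (\<Sum>m\<in>Poly_Mapping.keys Q. hp u D (mpoly_const (Poly_Mapping.lookup Q m) * M f m))"
    by (simp add: subst_lin lin_def hp_sum)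
  also have "\<dots> = (\<Sum>m\<in>Poly_Mapping.keys Q. if wdeg d m = D then mpoly_const (Poly_Mapping.lookup Q m) * M (\<lambda>i. hp u (d i) (f i)) m else 0)"
  proof (intro sum.cong refl)
    fix m assume m: "m \<in> Poly_Mapping.keys Q"
    have HM: "wle u (wdeg d m) (M f m) \<and> hp u (wdeg d m) (M f m) = M (\<lambda>i. hp u (d i) (f i)) m"
      by (rule M_lemma) (use F m in \<open>auto simp: mpoly_vars_def\<close>)
    show "hp u D (mpoly_const (Poly_Mapping.lookup Q m) * M f m) = (if wdeg d m = D then mpoly_const (Poly_Mapping.lookup Q m) * M (\<lambda>i. hp u (d i) (f i)) m else 0)"
    proof (cases "wdeg d m = D")
      case True
      thus ?thesis using hp_mult[OF wle_const HM[THEN conjunct1]] HM by simp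
    next
      case False
      hence "wdeg d m < D" using D[OF m] by simp
      moreover have "wle u (0 + wdeg d m) (mpoly_const (Poly_Mapping.lookup Q m) * M f m)"
        by (rule wle_mult[OF wle_const HM[THEN conjunct1]])
      ultimately show ?thesis using False hp_low by fastforce
    qed
  qed
  also have "\<dots> = mpoly_subst (hp d D Q) (\<lambda>i. hp u (d i) (f i))"
    by (simp add: hp_expand[of d D Q] subst_sum, intro sum.cong refl) (simp add: subst_single)
  finally show ?thesis .
qed


abbreviation U :: "nat \<Rightarrow> nat" where "U \<equiv> (\<lambda>_. 1)"

lemma mon_deg_wdeg: "mon_deg = wdeg U"
  by (rule ext) (simp add: mon_deg_def wdeg_def)

lemma top_hp: "top_component p = hp U (total_degree p) p"
  by (simp add: top_component_def hp_def mon_deg_wdeg)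

lemma total_degree_ge: "m \<in> Poly_Mapping.keys p \<Longrightarrow> wdeg U m \<le> total_degree p"
  unfolding total_degree_def mon_deg_wdeg[symmetric] by (rule Max_ge; auto)

lemma wle_total: "wle U (total_degree p) p"
  using total_degree_ge by (auto simp: wle_def)

lemma wdeg_U_0: "wdeg U m = 0 \<longleftrightarrow> m = 0"
  by (simp add: wdeg_eq_0)

lemma wdeg_U_0'[simp]: "wdeg (\<lambda>_. Suc 0) m = 0 \<longleftrightarrow> m = 0"
  by (simp add: wdeg_eq_0)

lemma wdeg_single: "wdeg u (Poly_Mapping.single i k) = u i * k"
  by (simp add: wdeg_def)

lemma keys_var: "Poly_Mapping.keys (mpoly_var i :: 'a::comm_ring_1 mpoly) = {Poly_Mapping.single i 1}"
  by (simp add: mpoly_var_def)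

lemma vars_wle: "mpoly_vars p \<subseteq> A \<longleftrightarrow> wle (\<lambda>i. if i \<in> A then 0 else 1) 0 p"
  by (auto simp: mpoly_vars_def wle_def wdeg_eq_0 split: if_splits)

lemma wle_diff: "wle u d p \<Longrightarrow> wle u d q \<Longrightarrow> wle u d (p - (q :: 'a::comm_ring_1 mpoly))"
  unfolding wle_def using keys_diff[of p q] by blast

lemma wle_var: "wle u (u i) (mpoly_var i :: 'a::comm_ring_1 mpoly)"
  by (simp add: wle_def keys_var wdeg_single)

lemma wle_var0: "u i = 0 \<Longrightarrow> wle u 0 (mpoly_var i :: 'a::comm_ring_1 mpoly)"
  by (simp add: wle_def keys_var wdeg_single)

lemma lookup_const: "Poly_Mapping.lookup (mpoly_const c) m = (if m = 0 then c else 0)"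
  by (simp add: mpoly_const_def lookup_single when_def)

theorem corollary4:
  fixes n :: nat and f :: "nat \<Rightarrow> 'a::{alg_closed_field, field_char_0} mpoly"
  assumes "poly_automorphism n f"
  shows "(\<forall>Q. mpoly_vars Q \<subseteq> {..<n} \<and> mpoly_subst Q (\<lambda>i. top_component (f i)) = 0 \<longrightarrow> Q = 0)
         \<longleftrightarrow> (\<forall>i<n. total_degree (f i) = 1)"
proof -
  from assms obtain g where fv: "\<And>i. i < n \<Longrightarrow> mpoly_vars (f i) \<subseteq> {..<n}"
    and gv: "\<And>i. i < n \<Longrightarrow> mpoly_vars (g i) \<subseteq> {..<n}"
    and gf: "\<And>i. i < n \<Longrightarrow> mpoly_subst (g i) f = mpoly_var i"
    and fg: "\<And>i. i < n \<Longrightarrow> mpoly_subst (f i) g = mpoly_var i"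
    unfolding poly_automorphism_def by blast
  let ?t = "\<lambda>i. top_component (f i)"
  let ?un = "\<lambda>i. if i \<in> {..<n} then 0 else 1 :: nat"
  have comp_id: "R = 0" if R: "mpoly_vars R \<subseteq> {..<n}" "mpoly_subst R f = 0" for R
  proof -
    have "mpoly_subst (mpoly_subst R f) g = mpoly_subst R (\<lambda>i. mpoly_subst (f i) g)"
      by (rule subst_compose)
    also have "\<dots> = mpoly_subst R mpoly_var"
      by (rule subst_cong) (use R fg in auto)
    also have "\<dots> = R" by (rule subst_var_id)
    finally show ?thesis using R by simp
  qed
  show ?thesis
  proof
    assume I: "\<forall>Q. mpoly_vars Q \<subseteq> {..<n} \<and> mpoly_subst Q ?t = 0 \<longrightarrow> Q = 0"
    define d where "d = (\<lambda>i. total_degree (f i))"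
    have tp: "?t = (\<lambda>j. hp U (d j) (f j))" by (simp add: d_def top_hp)
    have wf: "wle U (d j) (f j)" for j unfolding d_def by (rule wle_total)
    have d0: "d j \<noteq> 0" if j: "j < n" for j
    proof
      assume dj: "d j = 0"
      define c where "c = Poly_Mapping.lookup (f j) 0"
      have keys0: "m = 0" if "m \<in> Poly_Mapping.keys (f j)" for m
        using wf[of j] that unfolding wle_def dj by (metis le_zero_eq wdeg_U_0)
      have fc: "f j = mpoly_const c"
      proof (rule poly_mapping_eqI)
        fix m show "Poly_Mapping.lookup (f j) m = Poly_Mapping.lookup (mpoly_const c) m"
          using keys0[of m] by (cases "m = 0") (auto simp: lookup_const c_def in_keys_iff)
      qed
      have tj: "?t j = f j"
      proof (rule poly_mapping_eqI)
        fix m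
        show "Poly_Mapping.lookup (?t j) m = Poly_Mapping.lookup (f j) m"
          using keys0[of m] dj unfolding top_hp d_def by (auto simp: lookup_hp in_keys_iff)
      qed
      define Q where "Q = mpoly_var j - mpoly_const c"
      have "mpoly_vars Q \<subseteq> {..<n}"
        unfolding vars_wle Q_def using j by (intro wle_diff) (auto intro!: wle_var0)
      moreover have "mpoly_subst Q ?t = 0"
        by (simp add: Q_def subst_diff tj, simp add: fc)
      ultimately have "Q = 0" using I by blast
      moreover have "Poly_Mapping.lookup Q (Poly_Mapping.single j 1) = 1"
      proof -
        have "Poly_Mapping.single j (1::nat) \<noteq> 0"
          by (metis lookup_single_eq lookup_zero one_neq_zero)
        thus ?thesis by (simp add: Q_def lookup_minus lookup_const mpoly_var_def)
      qed
      ultimately show False by simp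
    qed
    have g1: "wdeg d m \<le> 1" if i: "i < n" and m: "m \<in> Poly_Mapping.keys (g i)" for i m
    proof (rule ccontr)
      assume "\<not> wdeg d m \<le> 1"
      define D where "D = Max (wdeg d ` Poly_Mapping.keys (g i))"
      have fin: "finite (wdeg d ` Poly_Mapping.keys (g i))" by simp
      have Dge: "wdeg d m' \<le> D" if "m' \<in> Poly_Mapping.keys (g i)" for m'
        unfolding D_def using fin that by (intro Max_ge) auto
      have "D \<in> wdeg d ` Poly_Mapping.keys (g i)"
        unfolding D_def using fin m by (intro Max_in) auto
      then obtain m1 where m1: "m1 \<in> Poly_Mapping.keys (g i)" "wdeg d m1 = D" by blast
      have D2: "1 < D" using Dge[OF m] \<open>\<not> wdeg d m \<le> 1\<close> by simp
      have "hp U D (mpoly_subst (g i) f) = mpoly_subst (hp d D (g i)) (\<lambda>j. hp U (d j) (f j))"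
        by (rule key_lemma) (use Dge wf in auto)
      moreover have "hp U D (mpoly_subst (g i) f) = 0"
        using gf[OF i] hp_low[OF wle_var[of U i] D2] by simp
      ultimately have "mpoly_subst (hp d D (g i)) ?t = 0" by (simp add: tp)
      moreover have "mpoly_vars (hp d D (g i)) \<subseteq> {..<n}"
      proof -
        have "Poly_Mapping.keys (hp d D (g i)) \<subseteq> Poly_Mapping.keys (g i)"
          by (auto simp: in_keys_iff lookup_hp split: if_splits)
        thus ?thesis using gv[OF i] unfolding mpoly_vars_def by blast
      qed
      ultimately have "hp d D (g i) = 0" using I by blast
      hence "Poly_Mapping.lookup (hp d D (g i)) m1 = 0" by simp
      thus False using m1 by (simp add: lookup_hp in_keys_iff)
    qed
    show "\<forall>i<n. total_degree (f i) = 1"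
    proof (intro allI impI)
      fix k assume k: "k < n"
      have "d k \<le> 1"
      proof (rule ccontr)
        assume dk: "\<not> d k \<le> 1"
        let ?u = "\<lambda>j. if j = k then 1 else 0 :: nat"
        have "wle ?u 0 (g i)" if i: "i < n" for i
          unfolding wle_def
        proof
          fix m assume m: "m \<in> Poly_Mapping.keys (g i)"
          have "k \<notin> Poly_Mapping.keys m"
          proof
            assume km: "k \<in> Poly_Mapping.keys m"
            have "d k * Poly_Mapping.lookup m k \<le> wdeg d m"
              unfolding wdeg_def by (rule member_le_sum) (use km in auto)
            moreover have "Poly_Mapping.lookup m k \<ge> 1" using km by (simp add: in_keys_iff)
            ultimately have "d k \<le> wdeg d m"
              by (metis dual_order.trans mult.right_neutral mult_le_mono2)
            thus False using g1[OF i m] dk by simp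
          qed
          thus "wdeg ?u m \<le> 0" by (auto simp: wdeg_eq_0)
        qed
        hence "wle ?u 0 (mpoly_subst (f k) g)"
          using fv[OF k] by (intro subst_wle0) (auto simp: mpoly_vars_def)
        hence "wle ?u 0 (mpoly_var k :: 'a mpoly)" using fg[OF k] by simp
        thus False by (simp add: wle_def keys_var wdeg_single)
      qed
      with d0[OF k] show "total_degree (f k) = 1" by (simp add: d_def)
    qed
  next
    assume deg1: "\<forall>i<n. total_degree (f i) = 1"
    define c where "c = (\<lambda>i. Poly_Mapping.lookup (f i) 0)"
    have top: "?t i = f i - mpoly_const (c i)" if i: "i < n" for i
    proof (rule poly_mapping_eqI)
      fix m
      have tdi: "total_degree (f i) = 1" using deg1 i by simp
      show "Poly_Mapping.lookup (?t i) m = Poly_Mapping.lookup (f i - mpoly_const (c i)) m"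
      proof (cases "m = 0")
        case True thus ?thesis by (simp add: top_hp tdi lookup_hp lookup_minus lookup_const c_def)
      next
        case False
        hence w: "wdeg U m \<noteq> 0" by (simp add: wdeg_U_0)
        show ?thesis
        proof (cases "m \<in> Poly_Mapping.keys (f i)")
          case True
          hence "wdeg U m \<le> 1" using total_degree_ge[OF True] tdi by simp
          hence "wdeg U m = 1" using w by (simp del: wdeg_U_0')
          thus ?thesis using False by (simp add: top_hp tdi lookup_hp lookup_minus lookup_const)
        next
          case nk: False
          thus ?thesis using False by (simp add: top_hp tdi lookup_hp lookup_minus lookup_const in_keys_iff)
        qed
      qed
    qed
    show "\<forall>Q. mpoly_vars Q \<subseteq> {..<n} \<and> mpoly_subst Q ?t = 0 \<longrightarrow> Q = 0"
    proof (intro allI impI, elim conjE)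
      fix Q :: "'a mpoly" assume Qv: "mpoly_vars Q \<subseteq> {..<n}" and Q0: "mpoly_subst Q ?t = 0"
      define h where "h = (\<lambda>i. mpoly_var i - mpoly_const (c i) :: 'a mpoly)"
      define h' where "h' = (\<lambda>i. mpoly_var i + mpoly_const (c i) :: 'a mpoly)"
      define R where "R = mpoly_subst Q h"
      have "mpoly_subst R f = mpoly_subst Q (\<lambda>i. mpoly_subst (h i) f)"
        unfolding R_def by (rule subst_compose)
      also have "\<dots> = mpoly_subst Q ?t"
        by (rule subst_cong) (use Qv top in \<open>auto simp: h_def subst_diff\<close>)
      finally have Rf: "mpoly_subst R f = 0" using Q0 by simp
      have Rv: "mpoly_vars R \<subseteq> {..<n}"
        unfolding vars_wle R_def
      proof (rule subst_wle0)
        fix i assume "i \<in> mpoly_vars Q"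
        hence "i < n" using Qv by auto
        thus "wle ?un 0 (h i)"
          unfolding h_def by (intro wle_diff) (auto intro!: wle_var0)
      qed
      have "R = 0" by (rule comp_id[OF Rv Rf])
      have "Q = mpoly_subst Q mpoly_var" by (simp add: subst_var_id)
      also have "\<dots> = mpoly_subst Q (\<lambda>i. mpoly_subst (h i) h')"
        by (simp add: h_def h'_def subst_diff)
      also have "\<dots> = mpoly_subst R h'"
        unfolding R_def by (rule subst_compose[symmetric])
      finally show "Q = 0" using \<open>R = 0\<close> by simp
    qed
  qed
qed


end
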